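(* Let $G=(U\sqcup V,E)$ be an undirected bipartite graph with parts $U$ and $V$, $|U|=|V|=r\ge 2$. Assume that for any distinct $u,u'\in U$ and any distinct $v,v'\in V$, the number of edges of $G$ with both endpoints in $\{u,u',v,v'\}$ is not equal to $1$. Then for every vertex $x\in U\sqcup V$ with positive degree in the bipartite complement $\overline{G}$, the connected component of $\overline{G}$ containing $x$ is a complete bipartite graph with partition classes $U\cap W$ and $V\cap W$, where $W$ is the vertex set of that component.
   Context: The bipartite complement of a bipartite graph $G=(U\sqcup V,E)$ is $\overline{G}=(U\sqcup V,\overline{E})$ with $\overline{E}=\{\{u,v\}:u\in U,v\in V,\{u,v\}\notin E\}$. *)

theory Defs
  imports Main
begin

text \<open>A bipartite graph with parts U, V is given by a set E of undirected edges,
  each edge being a two-element set {u, v} with u in U and v in V.\<close>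

definition bip_edges :: "'a set \<Rightarrow> 'a set \<Rightarrow> 'a set set" where
  "bip_edges U V = {{u, v} | u v. u \<in> U \<and> v \<in> V}"

definition bip_complement :: "'a set \<Rightarrow> 'a set \<Rightarrow> 'a set set \<Rightarrow> 'a set set" where
  "bip_complement U V E = {{u, v} | u v. u \<in> U \<and> v \<in> V \<and> {u, v} \<notin> E}"

definition adjacent :: "'a set set \<Rightarrow> 'a \<Rightarrow> 'a \<Rightarrow> bool" where
  "adjacent F x y \<longleftrightarrow> {x, y} \<in> F"

definition component :: "'a set set \<Rightarrow> 'a \<Rightarrow> 'a set" where
  "component F x = {y. (adjacent F)\<^sup>*\<^sup>* x y}"

end

theory Submission
  imports Defs
begin

lemma cmem:
  assumes "U \<inter> V = {}"
  shows "{a,b} \<in> bip_complement U V E \<longleftrightarrow> ((a\<in>U \<and> b\<in>V) \<or> (b\<in>U \<and> a\<in>V)) \<and> {a,b} \<notin> E"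
  unfolding bip_complement_def using assms
  by (auto simp: doubleton_eq_iff; metis insert_commute)

lemma four_set:
  assumes "U \<inter> V = {}" "E \<subseteq> bip_edges U V" "a\<in>U" "c\<in>U" "b\<in>V" "d\<in>V"
    "{a,b} \<notin> E" "{c,b} \<notin> E" "{c,d} \<notin> E" "{a,d} \<in> E"
  shows "{e \<in> E. e \<subseteq> {a, c, d, b}} = {{a,d}}"
proof (intro equalityI subsetI)
  fix e assume e: "e \<in> {e \<in> E. e \<subseteq> {a, c, d, b}}"
  then obtain p q where pq: "e = {p,q}" "p\<in>U" "q\<in>V" using assms(2) unfolding bip_edges_def by blast
  have "p \<in> {a,c}" using e pq assms(1,3-6) by blast
  moreover have "q \<in> {d,b}" using e pq assms(1,3-6) by blast
  ultimately show "e \<in> {{a,d}}" using e pq assms(7-9) by (auto simp: insert_commute)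
next
  fix e assume "e \<in> {{a,d}}" then show "e \<in> {e \<in> E. e \<subseteq> {a, c, d, b}}" using assms by auto
qed

theorem proposition7:
  fixes U V :: "'a set" and E :: "'a set set" and r :: nat
  assumes "finite U" and "finite V" and "U \<inter> V = {}"
    and "card U = r" and "card V = r" and "r \<ge> 2"
    and "E \<subseteq> bip_edges U V"
    and "\<And>u u' v v'. u \<in> U \<Longrightarrow> u' \<in> U \<Longrightarrow> u \<noteq> u' \<Longrightarrow> v \<in> V \<Longrightarrow> v' \<in> V \<Longrightarrow> v \<noteq> v'
           \<Longrightarrow> card {e \<in> E. e \<subseteq> {u, u', v, v'}} \<noteq> 1"
  shows "\<forall>x \<in> U \<union> V. (\<exists>y. {x, y} \<in> bip_complement U V E) \<longrightarrow>
           (let W = component (bip_complement U V E) x in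
             {e \<in> bip_complement U V E. e \<subseteq> W} = bip_edges (U \<inter> W) (V \<inter> W))"
proof (intro ballI impI)
  define C where "C = bip_complement U V E"
  have cm: "\<And>a b. {a,b} \<in> C \<longleftrightarrow> ((a\<in>U \<and> b\<in>V) \<or> (b\<in>U \<and> a\<in>V)) \<and> {a,b} \<notin> E"
    unfolding C_def using cmem[OF assms(3)] by blast
  have p3U: "{a,d} \<in> C" if "a\<in>U" "c\<in>U" "b\<in>V" "d\<in>V" "{a,b} \<in> C" "{c,b} \<in> C" "{c,d} \<in> C" for a b c d
  proof (rule ccontr)
    assume nad: "{a,d} \<notin> C"
    show False
    proof (cases "a = c \<or> b = d")
      case True then show ?thesis using nad that by auto
    next
      case False
      have ne: "{a,b} \<notin> E" "{c,b} \<notin> E" "{c,d} \<notin> E" using that cm by auto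
      have "{a,d} \<in> E" using nad that cm by auto
      then have "{e \<in> E. e \<subseteq> {a, c, d, b}} = {{a,d}}"
        using four_set[OF assms(3,7) that(1-4) ne] by blast
      then show False using assms(8)[of a c d b] False that by auto
    qed
  qed
  have p3: "{a,d} \<in> C" if "{a,b} \<in> C" "{c,b} \<in> C" "{c,d} \<in> C" for a b c d
  proof -
    have "a \<in> U \<and> b \<in> V \<or> a \<in> V \<and> b \<in> U" using that(1) cm by auto
    then show ?thesis
    proof
      assume "a \<in> U \<and> b \<in> V"
      then show ?thesis using p3U[of a c b d] that cm assms(3) by auto
    next
      assume h: "a \<in> V \<and> b \<in> U"
      have "d \<in> U" "c \<in> V" using h that cm assms(3) by auto
      then have "{d,a} \<in> C" using p3U[of d b c a] that h by (auto simp: insert_commute)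
      then show ?thesis by (simp add: insert_commute)
    qed
  qed
  fix x assume x: "x \<in> U \<union> V"
  let ?S = "\<lambda>y. (y \<in> U \<longleftrightarrow> x \<in> U)"
  have inv: "y \<in> U \<union> V \<and> (\<not> ?S y \<longrightarrow> {x,y} \<in> C) \<and> (?S y \<longrightarrow> (\<forall>w. {y,w} \<in> C \<longleftrightarrow> {x,w} \<in> C))"
    if "(adjacent C)\<^sup>*\<^sup>* x y" for y
    using that
  proof (induction rule: rtranclp_induct)
    case base then show ?case using x by auto
  next
    case (step y z)
    have yz: "{y,z} \<in> C" using step(2) unfolding adjacent_def .
    have zUV: "z \<in> U \<union> V" and side: "z \<in> U \<longleftrightarrow> \<not> y \<in> U" using yz cm assms(3) by auto
    show ?case
    proof (cases "?S y")
      case True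
      then have "{x,z} \<in> C" using step(3) yz by blast
      then show ?thesis using zUV side True by auto
    next
      case False
      then have xy: "{x,y} \<in> C" using step(3) by blast
      have "\<forall>w. {z,w} \<in> C \<longleftrightarrow> {x,w} \<in> C"
      proof (intro allI iffI)
        fix w assume "{z,w} \<in> C"
        then show "{x,w} \<in> C" using p3[of x y z w] xy yz by (simp add: insert_commute)
      next
        fix w assume "{x,w} \<in> C"
        then show "{z,w} \<in> C" using p3[of z y x w] xy yz by (simp add: insert_commute)
      qed
      then show ?thesis using zUV side False by auto
    qed
  qed
  show "let W = component (bip_complement U V E) x in
             {e \<in> bip_complement U V E. e \<subseteq> W} = bip_edges (U \<inter> W) (V \<inter> W)"
    unfolding Let_def C_def[symmetric]
  proof (intro equalityI subsetI)
    fix e assume e: "e \<in> {e \<in> C. e \<subseteq> component C x}"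
    then obtain u v where "e = {u,v}" "u \<in> U" "v \<in> V" unfolding C_def bip_complement_def by blast
    then show "e \<in> bip_edges (U \<inter> component C x) (V \<inter> component C x)"
      using e unfolding bip_edges_def by blast
  next
    fix e assume e: "e \<in> bip_edges (U \<inter> component C x) (V \<inter> component C x)"
    then obtain u v where uv: "e = {u,v}" "u \<in> U" "v \<in> V" "u \<in> component C x" "v \<in> component C x"
      unfolding bip_edges_def by blast
    have iu: "(adjacent C)\<^sup>*\<^sup>* x u" and iv: "(adjacent C)\<^sup>*\<^sup>* x v" using uv unfolding component_def by auto
    have "{u,v} \<in> C"
    proof (cases "x \<in> U")
      case True
      then have "{x,v} \<in> C" using inv[OF iv] uv assms(3) by auto
      then show ?thesis using inv[OF iu] uv True by auto
    next
      case False
      then have "{x,u} \<in> C" using inv[OF iu] uv by auto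
      then have "{v,u} \<in> C" using inv[OF iv] uv False x assms(3) by auto
      then show ?thesis by (simp add: insert_commute)
    qed
    moreover have "{u,v} \<subseteq> component C x" using uv by auto
    ultimately show "e \<in> {e \<in> C. e \<subseteq> component C x}" using uv by auto
  qed
qed

end
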